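(* Consider Scheme 3 below with nonnegative initial data $f_i^0\ge0$ ($i=0,\dots,M$), and fixed $h=1/M$ and $\tau>0$ (no restriction on the ratio $\tau/h^2$). Then the solution is nonnegative and, as $n\to\infty$, $$f_i^n\to0\ \ (i=1,\dots,M-1),\qquad \tfrac h2 f_0^n+\tfrac h2 f_M^n\to P_0,\qquad \tfrac h2 x_Mf_M^n\to E_0,$$ so that $\tfrac h2 f_0^n\to P_0-E_0$ and $\tfrac h2 f_M^n\to E_0$.
   Context: Let $M\ge2$ be an integer, $h=1/M$, $x_i=ih$ ($x_M=1$), $\tau>0$, $D_i=x_i(1-x_i)$, $\gamma=\tau/h^2$. Scheme 3: given $f^n_0,\dots,f^n_M$, the values $f^{n+1}$ satisfy $$\frac{f^{n+1}_i-f^{n}_i}{\tau}-\frac{D_{i+1}f^{n+1}_{i+1}-2D_{i}f^{n+1}_{i}+D_{i-1}f^{n+1}_{i-1}}{h^2}=0\quad(i=1,\dots,M-1),$$ $$f^{n+1}_0=f^{n}_0+2D_1\gamma f^{n+1}_1,\qquad f^{n+1}_M=f^{n}_M+2D_{M-1}\gamma f^{n+1}_{M-1}.$$ Initial discrete probability and expectation: $P_0=\tfrac h2 f_0^0+\tfrac h2 f_M^0+\sum_{i=1}^{M-1}f_i^0h$, $E_0=\tfrac h2 x_Mf_M^0+\sum_{i=1}^{M-1}x_if_i^0h$. *)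

theory Defs
  imports Complex_Main
begin

definition gridx :: "nat \<Rightarrow> nat \<Rightarrow> real" where
  "gridx M i = real i / real M"

definition diffD :: "nat \<Rightarrow> nat \<Rightarrow> real" where
  "diffD M i = gridx M i * (1 - gridx M i)"

definition scheme3 :: "nat \<Rightarrow> real \<Rightarrow> (nat \<Rightarrow> nat \<Rightarrow> real) \<Rightarrow> bool" where
  "scheme3 M \<tau> f \<longleftrightarrow>
     (let h = 1 / real M; \<gamma> = \<tau> / h\<^sup>2 in
      \<forall>n.
        (\<forall>i. 1 \<le> i \<and> i \<le> M - 1 \<longrightarrow>
           (f (Suc n) i - f n i) / \<tau>
           - (diffD M (i + 1) * f (Suc n) (i + 1) - 2 * diffD M i * f (Suc n) i
              + diffD M (i - 1) * f (Suc n) (i - 1)) / h\<^sup>2 = 0)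
      \<and> f (Suc n) 0 = f n 0 + 2 * diffD M 1 * \<gamma> * f (Suc n) 1
      \<and> f (Suc n) M = f n M + 2 * diffD M (M - 1) * \<gamma> * f (Suc n) (M - 1))"

definition P0 :: "nat \<Rightarrow> (nat \<Rightarrow> real) \<Rightarrow> real" where
  "P0 M g = (let h = 1 / real M in
     h / 2 * g 0 + h / 2 * g M + (\<Sum>i = 1..M - 1. g i * h))"

definition E0 :: "nat \<Rightarrow> (nat \<Rightarrow> real) \<Rightarrow> real" where
  "E0 M g = (let h = 1 / real M in
     h / 2 * gridx M M * g M + (\<Sum>i = 1..M - 1. gridx M i * g i * h))"

end

theory Submission
  imports Defs
begin
lemma tele1: fixes u :: "nat \<Rightarrow> real"
 shows "(\<Sum>i=1..N. u (i+1) - 2*u i + u (i-1)) = u (N+1) - u N - u 1 + u 0"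
 by (induction N) (auto simp: sum.cl_ivl_Suc)
lemma tele2: fixes u :: "nat \<Rightarrow> real"
 shows "(\<Sum>i=1..N. real i * (u (i+1) - 2*u i + u (i-1))) = real N * u (N+1) - real (N+1) * u N + u 0"
 by (induction N) (auto simp: sum.cl_ivl_Suc algebra_simps)
lemma Dsec: assumes "M \<ge> 1" "1 \<le> i"
  shows "diffD M (i+1) + diffD M (i-1) - 2*diffD M i = -2/real M^2"
  using assms by (simp add: diffD_def gridx_def of_nat_diff field_simps power2_eq_square)
lemma Dnn: assumes "i \<le> M" shows "diffD M i \<ge> 0"
proof -
  have "real i / real M \<le> 1" using assms by (cases "M=0") (auto simp: divide_le_eq_1)
  then show ?thesis by (simp add: diffD_def gridx_def)
qed
lemma D0: "diffD M 0 = 0" by (simp add: diffD_def gridx_def)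
lemma DM: "M \<ge> 1 \<Longrightarrow> diffD M M = 0" by (simp add: diffD_def gridx_def)

lemma scheme_facts:
  assumes "M \<ge> 2" "\<tau> > 0" "scheme3 M \<tau> f"
  shows "\<And>n i. 1 \<le> i \<Longrightarrow> i \<le> M-1 \<Longrightarrow> f (Suc n) i - f n i = \<tau>*real M^2*
      (diffD M (i+1)*f (Suc n) (i+1) - 2*diffD M i*f (Suc n) i + diffD M (i-1)*f (Suc n) (i-1))"
    and "\<And>n. f (Suc n) 0 = f n 0 + 2*diffD M 1*(\<tau>*real M^2)*f (Suc n) 1"
    and "\<And>n. f (Suc n) M = f n M + 2*diffD M (M-1)*(\<tau>*real M^2)*f (Suc n) (M-1)"
proof -
  have M0: "real M > 0" using assms by simp
  have e: "\<tau> / (1/real M)^2 = \<tau>*real M^2" by (simp add: power_one_over)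
  fix n i assume i: "1 \<le> i" "i \<le> M-1"
  let ?c = "diffD M (i+1)*f (Suc n) (i+1) - 2*diffD M i*f (Suc n) i + diffD M (i-1)*f (Suc n) (i-1)"
  have "(f (Suc n) i - f n i)/\<tau> - ?c/(1/real M)^2 = 0"
    using assms(3) i unfolding scheme3_def Let_def by blast
  then have "(f (Suc n) i - f n i)/\<tau> = ?c*real M^2" by (simp add: power_one_over)
  then show "f (Suc n) i - f n i = \<tau>*real M^2*?c" using assms(2) by (simp add: field_simps)
next
  fix n
  show "f (Suc n) 0 = f n 0 + 2*diffD M 1*(\<tau>*real M^2)*f (Suc n) 1"
    using assms(3) unfolding scheme3_def Let_def by (simp add: power_one_over)
next
  fix n
  show "f (Suc n) M = f n M + 2*diffD M (M-1)*(\<tau>*real M^2)*f (Suc n) (M-1)"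
    using assms(3) unfolding scheme3_def Let_def by (simp add: power_one_over)
qed


lemma key:
  assumes "M \<ge> 2" "\<tau> > 0" "scheme3 M \<tau> f" "1 \<le> i" "i \<le> M-1"
  shows "f n i = (1+2*\<tau>)*f (Suc n) i + \<tau>*real M^2*diffD M (i+1)*(f (Suc n) i - f (Suc n) (i+1))
     + \<tau>*real M^2*diffD M (i-1)*(f (Suc n) i - f (Suc n) (i-1))"
proof -
  let ?c = "\<tau>*real M^2" and ?g = "f (Suc n)"
  have M0: "real M > 0" using assms by simp
  have e: "?c*(diffD M (i+1) + diffD M (i-1) - 2*diffD M i) = -2*\<tau>"
    using Dsec[of M i] assms M0 by simp
  have e2: "?g i * (?c*(diffD M (i+1) + diffD M (i-1) - 2*diffD M i)) = ?g i * (-2*\<tau>)"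
    using e by simp
  have int: "?g i - f n i = ?c*(diffD M (i+1)*?g (i+1) - 2*diffD M i*?g i + diffD M (i-1)*?g (i-1))"
    using scheme_facts(1)[OF assms(1-3) assms(4,5)] .
  show ?thesis using int e2 by (simp add: algebra_simps)
qed

lemma step:
  assumes "M \<ge> 2" "\<tau> > 0" "scheme3 M \<tau> f"
  shows "Max (f (Suc n) ` {1..M-1}) * (1+2*\<tau>) \<le> Max (f n ` {1..M-1})"
    and "Min (f (Suc n) ` {1..M-1}) * (1+2*\<tau>) \<ge> Min (f n ` {1..M-1})"
proof -
  let ?I = "{1..M-1}" and ?c = "\<tau>*real M^2" and ?g = "f (Suc n)"
  have ne: "?I \<noteq> {}" "finite ?I" using assms by auto
  have c0: "?c \<ge> 0" using assms by simp
  obtain k where k: "k \<in> ?I" "?g k = Max (?g ` ?I)"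
  proof -
    have "Max (?g ` ?I) \<in> ?g ` ?I" using ne by (intro Max_in) auto
    then show ?thesis using that by (metis imageE)
  qed
  have A: "?c*diffD M (k+1)*(?g k - ?g (k+1)) \<ge> 0"
  proof (cases "k+1 \<le> M-1")
    case True
    then have "?g (k+1) \<le> ?g k" using k ne by auto
    moreover have "diffD M (k+1) \<ge> 0" using Dnn True by simp
    ultimately show ?thesis using c0 by simp
  next
    case False
    then have "k+1 = M" using k by auto
    then show ?thesis using DM assms by simp
  qed
  have B: "?c*diffD M (k-1)*(?g k - ?g (k-1)) \<ge> 0"
  proof (cases "k-1 \<ge> 1")
    case True
    then have "?g (k-1) \<le> ?g k" using k ne by auto
    moreover have "diffD M (k-1) \<ge> 0" using k by (intro Dnn) auto
    ultimately show ?thesis using c0 by simp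
  next
    case False
    then have "k-1 = 0" by auto
    then show ?thesis using D0 by simp
  qed
  have "f n k \<le> Max (f n ` ?I)" using k ne by auto
  then show "Max (?g ` ?I) * (1+2*\<tau>) \<le> Max (f n ` ?I)"
  proof -
    have K: "f n k = (1+2*\<tau>)*?g k + ?c*diffD M (k+1)*(?g k - ?g (k+1)) + ?c*diffD M (k-1)*(?g k - ?g (k-1))"
      using key[OF assms, of k n] k by simp
    have "(1+2*\<tau>)*?g k = Max (?g ` ?I) * (1+2*\<tau>)" using k(2) by simp
    then show ?thesis using K A B \<open>f n k \<le> Max (f n ` ?I)\<close> by linarith
  qed
next
  let ?I = "{1..M-1}" and ?c = "\<tau>*real M^2" and ?g = "f (Suc n)"
  have ne: "?I \<noteq> {}" "finite ?I" using assms by auto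
  have c0: "?c \<ge> 0" using assms by simp
  obtain k where k: "k \<in> ?I" "?g k = Min (?g ` ?I)"
  proof -
    have "Min (?g ` ?I) \<in> ?g ` ?I" using ne by (intro Min_in) auto
    then show ?thesis using that by (metis imageE)
  qed
  have A: "?c*diffD M (k+1)*(?g k - ?g (k+1)) \<le> 0"
  proof (cases "k+1 \<le> M-1")
    case True
    then have "?g (k+1) \<ge> ?g k" using k ne by auto
    moreover have "diffD M (k+1) \<ge> 0" using Dnn True by simp
    ultimately show ?thesis using c0 by (simp add: mult_nonneg_nonpos)
  next
    case False
    then have "k+1 = M" using k by auto
    then show ?thesis using DM assms by simp
  qed
  have B: "?c*diffD M (k-1)*(?g k - ?g (k-1)) \<le> 0"
  proof (cases "k-1 \<ge> 1")
    case True
    then have "?g (k-1) \<ge> ?g k" using k ne by auto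
    moreover have "diffD M (k-1) \<ge> 0" using k by (intro Dnn) auto
    ultimately show ?thesis using c0 by (simp add: mult_nonneg_nonpos)
  next
    case False
    then have "k-1 = 0" by auto
    then show ?thesis using D0 by simp
  qed
  have "f n k \<ge> Min (f n ` ?I)" using k ne by auto
  then show "Min (?g ` ?I) * (1+2*\<tau>) \<ge> Min (f n ` ?I)"
  proof -
    have K: "f n k = (1+2*\<tau>)*?g k + ?c*diffD M (k+1)*(?g k - ?g (k+1)) + ?c*diffD M (k-1)*(?g k - ?g (k-1))"
      using key[OF assms, of k n] k by simp
    have "(1+2*\<tau>)*?g k = Min (?g ` ?I) * (1+2*\<tau>)" using k(2) by simp
    then show ?thesis using K A B \<open>f n k \<ge> Min (f n ` ?I)\<close> by linarith
  qed
qed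


lemma diffsum:
  assumes "M \<ge> 2" "\<tau> > 0" "scheme3 M \<tau> f"
  shows "(\<Sum>i=1..M-1. f (Suc n) i - f n i) = - (\<tau>*real M^2)*(diffD M 1*f (Suc n) 1 + diffD M (M-1)*f (Suc n) (M-1))"
    and "(\<Sum>i=1..M-1. real i * (f (Suc n) i - f n i)) = - (\<tau>*real M^2)*(real M * (diffD M (M-1)*f (Suc n) (M-1)))"
proof -
  let ?c = "\<tau>*real M^2" and ?g = "f (Suc n)"
  define u where "u = (\<lambda>i. diffD M i * ?g i)"
  have u0: "u 0 = 0" "u M = 0" using D0 DM assms by (auto simp: u_def)
  have MM: "M-1+1 = M" using assms by simp
  have "(\<Sum>i=1..M-1. ?g i - f n i) = (\<Sum>i=1..M-1. ?c*(u(i+1) - 2*u i + u(i-1)))"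
    by (rule sum.cong) (auto simp: scheme_facts(1)[OF assms] u_def)
  also have "\<dots> = ?c * (\<Sum>i=1..M-1. (u(i+1) - 2*u i + u(i-1)))" by (simp add: sum_distrib_left)
  also have "\<dots> = ?c * (u (M-1+1) - u (M-1) - u 1 + u 0)" by (simp only: tele1)
  finally show "(\<Sum>i=1..M-1. ?g i - f n i) = - ?c*(diffD M 1*?g 1 + diffD M (M-1)*?g (M-1))"
    using MM assms by (simp add: u_def D0 DM algebra_simps)
  have "(\<Sum>i=1..M-1. real i * (?g i - f n i)) = (\<Sum>i=1..M-1. ?c*(real i * (u(i+1) - 2*u i + u(i-1))))"
    by (rule sum.cong) (auto simp: scheme_facts(1)[OF assms] u_def)
  also have "\<dots> = ?c * (\<Sum>i=1..M-1. real i * (u(i+1) - 2*u i + u(i-1)))" by (simp add: sum_distrib_left)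
  also have "\<dots> = ?c * (real (M-1) * u (M-1+1) - real (M-1+1) * u (M-1) + u 0)" by (simp only: tele2)
  finally show "(\<Sum>i=1..M-1. real i * (?g i - f n i)) = - ?c*(real M * (diffD M (M-1)*?g (M-1)))"
    using MM assms by (simp add: u_def D0 DM algebra_simps)
qed

lemma consP:
  assumes "M \<ge> 2" "\<tau> > 0" "scheme3 M \<tau> f"
  shows "P0 M (f (Suc n)) = P0 M (f n)"
proof -
  let ?c = "\<tau>*real M^2" and ?g = "f (Suc n)" and ?h = "1/real M"
  have "P0 M ?g - P0 M (f n) = ?h/2*(?g 0 - f n 0) + ?h/2*(?g M - f n M) + ?h*(\<Sum>i=1..M-1. ?g i - f n i)"
    unfolding P0_def Let_def by (simp add: sum_subtractf sum_distrib_left algebra_simps diff_divide_distrib)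
  also have "\<dots> = 0"
  proof -
    have a: "?g 0 - f n 0 = 2*diffD M 1*?c*?g 1" using scheme_facts(2)[OF assms, of n] by simp
    have b: "?g M - f n M = 2*diffD M (M-1)*?c*?g (M-1)" using scheme_facts(3)[OF assms, of n] by simp
    show ?thesis unfolding a b diffsum(1)[OF assms, of n] by (simp add: algebra_simps)
  qed
  finally show ?thesis by simp
qed

lemma consE:
  assumes "M \<ge> 2" "\<tau> > 0" "scheme3 M \<tau> f"
  shows "E0 M (f (Suc n)) = E0 M (f n)"
proof -
  let ?c = "\<tau>*real M^2" and ?g = "f (Suc n)" and ?h = "1/real M"
  have M0: "real M > 0" using assms by simp
  have "E0 M ?g - E0 M (f n) = ?h/2*(?g M - f n M) + ?h/real M*(\<Sum>i=1..M-1. real i * (?g i - f n i))"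
    unfolding E0_def Let_def gridx_def using M0 by (simp add: sum_subtractf sum_distrib_left algebra_simps diff_divide_distrib)
  also have "\<dots> = 0" using diffsum(2)[OF assms, of n] scheme_facts(3)[OF assms, of n] M0
    by (simp add: algebra_simps)
  finally show ?thesis by simp
qed


theorem theorem3:
  fixes M :: nat and \<tau> :: real and f :: "nat \<Rightarrow> nat \<Rightarrow> real"
  assumes "M \<ge> 2" and "\<tau> > 0"
    and "scheme3 M \<tau> f"
    and "\<forall>i \<le> M. f 0 i \<ge> 0"
  shows "(\<forall>n. \<forall>i \<le> M. f n i \<ge> 0)
    \<and> (\<forall>i. 1 \<le> i \<and> i \<le> M - 1 \<longrightarrow> (\<lambda>n. f n i) \<longlonglongrightarrow> 0)
    \<and> (\<lambda>n. (1 / real M) / 2 * f n 0 + (1 / real M) / 2 * f n M) \<longlonglongrightarrow> P0 M (f 0)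
    \<and> (\<lambda>n. (1 / real M) / 2 * gridx M M * f n M) \<longlonglongrightarrow> E0 M (f 0)
    \<and> (\<lambda>n. (1 / real M) / 2 * f n 0) \<longlonglongrightarrow> P0 M (f 0) - E0 M (f 0)
    \<and> (\<lambda>n. (1 / real M) / 2 * f n M) \<longlonglongrightarrow> E0 M (f 0)"
proof -
  note A = assms(1-3)
  let ?I = "{1..M-1}" and ?h = "1/real M"
  define q where "q = 1/(1+2*\<tau>)"
  define Mx where "Mx n = Max (f n ` ?I)" for n
  define mn where "mn n = Min (f n ` ?I)" for n
  have ne: "finite ?I" "?I \<noteq> {}" using assms by auto
  have tp: "1+2*\<tau> > 0" using assms by simp
  have q0: "q \<ge> 0" "q < 1" using assms by (auto simp: q_def)
  have mn0: "mn n \<ge> 0" for n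
  proof (induction n)
    case 0
    show ?case unfolding mn_def using ne assms(4) by (subst Min_ge_iff) auto
  next
    case (Suc n)
    have "mn (Suc n) * (1+2*\<tau>) \<ge> 0" using step(2)[OF A, of n] Suc by (simp add: mn_def)
    then show ?case using tp by (simp add: zero_le_mult_iff)
  qed
  have int_nn: "f n i \<ge> 0" if "i \<in> ?I" for n i
  proof -
    have "f n i \<ge> mn n" unfolding mn_def using ne that by simp
    then show ?thesis using mn0[of n] by simp
  qed
  have Mxb: "Mx n \<le> Mx 0 * q^n" for n
  proof (induction n)
    case 0 show ?case by simp
  next
    case (Suc n)
    have "Mx (Suc n) * (1+2*\<tau>) \<le> Mx n" using step(1)[OF A, of n] by (simp add: Mx_def)
    then have "Mx (Suc n) \<le> Mx n * q" using tp by (simp add: q_def pos_le_divide_eq)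
    also have "\<dots> \<le> Mx 0 * q^n * q" using Suc q0 by (simp add: mult_right_mono)
    finally show ?case by (simp add: algebra_simps)
  qed
  have intlim: "(\<lambda>n. f n i) \<longlonglongrightarrow> 0" if "i \<in> ?I" for i
  proof (rule tendsto_sandwich[of "\<lambda>n. 0" _ _ "\<lambda>n. Mx 0 * q^n"])
    show "\<forall>\<^sub>F n in sequentially. 0 \<le> f n i" using int_nn that by simp
    show "\<forall>\<^sub>F n in sequentially. f n i \<le> Mx 0 * q^n"
    proof (rule always_eventually, rule allI)
      fix n
      have "f n i \<le> Mx n" unfolding Mx_def using ne that by simp
      then show "f n i \<le> Mx 0 * q^n" using Mxb[of n] by simp
    qed
    show "(\<lambda>n. 0) \<longlonglongrightarrow> (0::real)" by simp
    have "(\<lambda>n. q^n) \<longlonglongrightarrow> 0" using q0 by (intro LIMSEQ_power_zero) auto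
    then show "(\<lambda>n. Mx 0 * q^n) \<longlonglongrightarrow> 0" using tendsto_mult_right_zero by blast
  qed
  have sumlim: "(\<lambda>n. \<Sum>i\<in>?I. w i * f n i * ?h) \<longlonglongrightarrow> 0" for w :: "nat \<Rightarrow> real"
  proof -
    have "(\<lambda>n. \<Sum>i\<in>?I. w i * f n i * ?h) \<longlonglongrightarrow> (\<Sum>i\<in>?I. w i * 0 * ?h)"
      by (intro tendsto_sum tendsto_mult tendsto_const intlim) auto
    then show ?thesis by simp
  qed
  have b0: "f n 0 \<ge> 0" for n
  proof (induction n)
    case 0 show ?case using assms(4) by simp
  next
    case (Suc n)
    have "diffD M 1 \<ge> 0" using assms by (intro Dnn) auto
    moreover have "f (Suc n) 1 \<ge> 0" using assms by (intro int_nn) auto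
    ultimately show ?case using scheme_facts(2)[OF A, of n] Suc assms by simp
  qed
  have bM: "f n M \<ge> 0" for n
  proof (induction n)
    case 0 show ?case using assms(4) by simp
  next
    case (Suc n)
    have "diffD M (M-1) \<ge> 0" using assms by (intro Dnn) auto
    moreover have "f (Suc n) (M-1) \<ge> 0" using assms by (intro int_nn) auto
    ultimately show ?case using scheme_facts(3)[OF A, of n] Suc assms by simp
  qed
  have nn: "\<forall>n. \<forall>i \<le> M. f n i \<ge> 0"
  proof (intro allI impI)
    fix n i assume "i \<le> M"
    then consider "i = 0" | "i = M" | "i \<in> ?I" by force
    then show "f n i \<ge> 0" using b0 bM int_nn by cases auto
  qed
  have Pc: "P0 M (f n) = P0 M (f 0)" for n
    by (induction n) (use consP[OF A] in auto)
  have Ec: "E0 M (f n) = E0 M (f 0)" for n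
    by (induction n) (use consE[OF A] in auto)
  have gM: "gridx M M = 1" using assms by (simp add: gridx_def)
  have L1: "(\<lambda>n. ?h / 2 * f n 0 + ?h / 2 * f n M) \<longlonglongrightarrow> P0 M (f 0)"
  proof -
    have e: "?h / 2 * f n 0 + ?h / 2 * f n M = P0 M (f 0) - (\<Sum>i\<in>?I. 1 * f n i * ?h)" for n
      using Pc[of n] unfolding P0_def Let_def by simp
    have "(\<lambda>n. P0 M (f 0) - (\<Sum>i\<in>?I. 1 * f n i * ?h)) \<longlonglongrightarrow> P0 M (f 0) - 0"
      by (intro tendsto_diff tendsto_const sumlim)
    then show ?thesis unfolding e by simp
  qed
  have L2: "(\<lambda>n. ?h / 2 * gridx M M * f n M) \<longlonglongrightarrow> E0 M (f 0)"
  proof -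
    have e: "?h / 2 * gridx M M * f n M = E0 M (f 0) - (\<Sum>i\<in>?I. gridx M i * f n i * ?h)" for n
      using Ec[of n] unfolding E0_def Let_def by simp
    have "(\<lambda>n. E0 M (f 0) - (\<Sum>i\<in>?I. gridx M i * f n i * ?h)) \<longlonglongrightarrow> E0 M (f 0) - 0"
      by (intro tendsto_diff tendsto_const sumlim)
    then show ?thesis unfolding e by simp
  qed
  have L3: "(\<lambda>n. ?h / 2 * f n M) \<longlonglongrightarrow> E0 M (f 0)" using L2 gM by simp
  have "(\<lambda>n. (?h / 2 * f n 0 + ?h / 2 * f n M) - ?h / 2 * f n M) \<longlonglongrightarrow> P0 M (f 0) - E0 M (f 0)"
    by (intro tendsto_diff L1 L3)
  then have L4: "(\<lambda>n. ?h / 2 * f n 0) \<longlonglongrightarrow> P0 M (f 0) - E0 M (f 0)" by simp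
  show ?thesis using nn intlim L1 L2 L3 L4 by auto
qed

end
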